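(* For every positive integer $m$ and prime power $q$, $\sigma(Sp_{2m}(q))=\sigma(S_{2m}(q))$, where $S_{2m}(q)=PSp_{2m}(q)$ is the quotient of $Sp_{2m}(q)$ by its center.
   Context: The covering number $\sigma(G)$ of a group $G$ is the least positive integer $n$ such that $G$ is the union of $n$ proper subgroups, with $\sigma(G)=\infty$ if no finite such union exists. $Sp_{2m}(q)$ is the symplectic group of a nondegenerate alternating form on $\mathbb{F}_q^{2m}$. *)

theory Defs
  imports "Jordan_Normal_Form.Matrix" "HOL-Algebra.Coset" "HOL-Library.Extended_Nat"
begin

definition covering_number :: "('g, 'b) monoid_scheme \<Rightarrow> enat" where
  "covering_number G =
     (if \<exists>n. \<exists>\<H>. finite \<H> \<and> card \<H> = n \<and>
              (\<forall>H\<in>\<H>. subgroup H G \<and> H \<noteq> carrier G) \<and> \<Union>\<H> = carrier G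
      then enat (LEAST n. \<exists>\<H>. finite \<H> \<and> card \<H> = n \<and>
              (\<forall>H\<in>\<H>. subgroup H G \<and> H \<noteq> carrier G) \<and> \<Union>\<H> = carrier G)
      else \<infinity>)"

definition group_center :: "('g, 'b) monoid_scheme \<Rightarrow> 'g set" where
  "group_center G = {z \<in> carrier G. \<forall>g \<in> carrier G. z \<otimes>\<^bsub>G\<^esub> g = g \<otimes>\<^bsub>G\<^esub> z}"

text \<open>Gram matrix of the standard nondegenerate alternating form on K^(2m):
  J = [[0, I_m], [-I_m, 0]].\<close>
definition symp_J :: "nat \<Rightarrow> 'a :: field mat" where
  "symp_J m = mat (2*m) (2*m) (\<lambda>(i,j).
      if i < m \<and> j = i + m then 1
      else if m \<le> i \<and> j + m = i then - 1 else 0)"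

definition Sp :: "nat \<Rightarrow> 'a :: field mat monoid" where
  "Sp m = \<lparr> carrier = {A \<in> carrier_mat (2*m) (2*m).
                         transpose_mat A * symp_J m * A = symp_J m},
            mult = (*), one = 1\<^sub>m (2*m) \<rparr>"

definition PSp :: "nat \<Rightarrow> 'a :: field mat set monoid" where
  "PSp m = Sp m Mod group_center (Sp m)"

end

theory Submission
  imports Defs "Jordan_Normal_Form.Determinant"
begin


definition covers :: "('g, 'b) monoid_scheme \<Rightarrow> nat \<Rightarrow> bool" where
 "covers G n \<longleftrightarrow> (\<exists>\<H>. finite \<H> \<and> card \<H> = n \<and>
              (\<forall>H\<in>\<H>. subgroup H G \<and> H \<noteq> carrier G) \<and> \<Union>\<H> = carrier G)"

lemma cn: "covering_number X = (if \<exists>n. covers X n then enat (LEAST n. covers X n) else \<infinity>)"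
    unfolding covering_number_def covers_def by simp

lemma covnum_eq:
  assumes a: "\<And>n. covers G n \<Longrightarrow> \<exists>k\<le>n. covers G' k"
      and b: "\<And>n. covers G' n \<Longrightarrow> covers G n"
  shows "covering_number G = covering_number G'"
proof -
  show ?thesis
  proof (cases "\<exists>n. covers G n")
    case True
    then have ex': "\<exists>n. covers G' n" using a by blast
    have "(LEAST n. covers G n) = (LEAST n. covers G' n)"
    proof (rule antisym)
      obtain k where "k \<le> (LEAST n. covers G n)" "covers G' k" using a[OF LeastI_ex[OF True]] by blast
      then show "(LEAST n. covers G' n) \<le> (LEAST n. covers G n)"
        using Least_le[of "covers G'" k] by linarith
      show "(LEAST n. covers G n) \<le> (LEAST n. covers G' n)"
        using b[OF LeastI_ex[OF ex']] by (rule Least_le)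
    qed
    then show ?thesis using True ex' by (simp add: cn)
  next
    case False
    then have "\<not> (\<exists>n. covers G' n)" using b by blast
    then show ?thesis using False by (simp add: cn)
  qed
qed

lemma cover_quot:
  fixes G :: "('g, 'b) monoid_scheme" (structure)
  assumes grp: "group G" and nrm: "N \<lhd> G"
  and P: "\<And>H. subgroup H G \<Longrightarrow> H \<noteq> carrier G \<Longrightarrow> (\<lambda>a. N #> a) ` H \<noteq> carrier (G Mod N)"
  shows "covering_number G = covering_number (G Mod N)"
proof -
  interpret normal N G by (rule nrm)
  let ?h = "\<lambda>a. N #> a"
  have hh: "?h \<in> hom G (G Mod N)" by (rule r_coset_hom_Mod)
  interpret Q: group "G Mod N" by (rule factorgroup_is_group)
  interpret gh: group_hom G "G Mod N" ?h
    using hh by (simp add: group_hom_def group_hom_axioms_def is_group factorgroup_is_group)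
  have surj: "?h ` carrier G = carrier (G Mod N)"
    by (auto simp: FactGroup_def RCOSETS_def)
  show ?thesis
  proof (rule covnum_eq)
    fix n assume "covers G n"
    then obtain \<H> where H: "finite \<H>" "card \<H> = n" "\<forall>H\<in>\<H>. subgroup H G \<and> H \<noteq> carrier G"
        "\<Union>\<H> = carrier G" unfolding covers_def by blast
    let ?K = "(\<lambda>H. ?h ` H) ` \<H>"
    have "covers (G Mod N) (card ?K)"
      unfolding covers_def
    proof (intro exI conjI ballI)
      show "finite ?K" using H by simp
      show "card ?K = card ?K" ..
      fix K assume "K \<in> ?K"
      then obtain H where HH: "H \<in> \<H>" "K = ?h ` H" by blast
      have s1: "subgroup H G" and s2: "H \<noteq> carrier G" using H(3) HH(1) by blast+
      show "subgroup K (G Mod N)" unfolding HH(2) by (rule gh.subgroup_img_is_subgroup[OF s1])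
      show "K \<noteq> carrier (G Mod N)" unfolding HH(2) by (rule P[OF s1 s2])
    next
      have "\<Union>?K = ?h ` (\<Union>\<H>)" by (simp add: image_Union)
      then show "\<Union>?K = carrier (G Mod N)" using H(4) surj by simp
    qed
    moreover have "card ?K \<le> n" using H(1,2) card_image_le by metis
    ultimately show "\<exists>k\<le>n. covers (G Mod N) k" by blast
  next
    fix n assume "covers (G Mod N) n"
    then obtain \<K> where K: "finite \<K>" "card \<K> = n" "\<forall>K\<in>\<K>. subgroup K (G Mod N) \<and> K \<noteq> carrier (G Mod N)"
        "\<Union>\<K> = carrier (G Mod N)" unfolding covers_def by blast
    let ?pre = "\<lambda>K. {x \<in> carrier G. ?h x \<in> K}"
    have img: "?h ` ?pre K = K" if "K \<in> \<K>" for K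
    proof -
      have "subgroup K (G Mod N)" using K(3) that by blast
      then have "K \<subseteq> carrier (G Mod N)" by (rule subgroup.subset)
      moreover have "?h ` ?pre K = K \<inter> ?h ` carrier G" by blast
      ultimately show ?thesis using surj by (simp add: Int_absorb2)
    qed
    have inj: "inj_on ?pre \<K>"
      by (rule inj_onI) (metis img)
    have "covers G (card (?pre ` \<K>))"
      unfolding covers_def
    proof (intro exI conjI ballI)
      show "finite (?pre ` \<K>)" using K by simp
      show "card (?pre ` \<K>) = card (?pre ` \<K>)" ..
      fix H assume "H \<in> ?pre ` \<K>"
      then obtain Ko where Ko: "Ko \<in> \<K>" "H = ?pre Ko" by blast
      then have sK: "subgroup Ko (G Mod N)" and pK: "Ko \<noteq> carrier (G Mod N)" using K(3) by auto
      show "subgroup H G"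
      proof
        show "H \<subseteq> carrier G" using Ko by auto
        fix x y assume "x \<in> H" "y \<in> H"
        then show "x \<otimes> y \<in> H" using Ko gh.hom_mult subgroup.m_closed[OF sK] by auto
      next
        show "\<one> \<in> H" using Ko gh.hom_one subgroup.one_closed[OF sK] by auto
      next
        fix x assume "x \<in> H"
        then show "inv x \<in> H" using Ko gh.hom_inv subgroup.m_inv_closed[OF sK] by auto
      qed
      show "H \<noteq> carrier G"
      proof
        assume "H = carrier G"
        then have "?h ` carrier G = Ko" using img Ko by metis
        then show False using pK surj by simp
      qed
    next
      have "\<Union>(?pre ` \<K>) = {x \<in> carrier G. ?h x \<in> \<Union>\<K>}" by auto
      also have "\<dots> = carrier G" using K(4) surj by auto
      finally show "\<Union>(?pre ` \<K>) = carrier G" .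
    qed
    then show "covers G n" using card_image[OF inj] K(2) by simp
  qed
qed



definition Em :: "nat \<Rightarrow> nat \<Rightarrow> nat \<Rightarrow> 'a :: field mat" where
  "Em n p q = mat n n (\<lambda>(i,j). if i = p \<and> j = q then 1 else 0)"

lemma Em_carrier[simp]: "Em n p q \<in> carrier_mat n n" by (simp add: Em_def)
lemma Em_index[simp]: "i < n \<Longrightarrow> j < n \<Longrightarrow> Em n p q $$ (i,j) = (if i = p \<and> j = q then 1 else 0)"
  by (simp add: Em_def)
lemma Em_dims[simp]: "dim_row (Em n p q) = n" "dim_col (Em n p q) = n" by (simp_all add: Em_def)

lemma mult_Em_right:
  assumes A: "A \<in> carrier_mat n n" and p: "p < n" and r: "r < n" and s: "s < n"
  shows "(A * Em n p q) $$ (r,s) = (if s = q then A $$ (r,p) else 0)"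
proof -
  have "(A * Em n p q) $$ (r,s) = (\<Sum>k\<in>{0..<n}. A $$ (r,k) * (if k = p \<and> s = q then 1 else 0))"
    using A r s by (simp add: scalar_prod_def)
  also have "\<dots> = (\<Sum>k\<in>{0..<n}. if k = p then (if s = q then A $$ (r,k) else 0) else 0)"
    by (rule sum.cong) auto
  also have "\<dots> = (if s = q then A $$ (r,p) else 0)" using p by simp
  finally show ?thesis .
qed

lemma mult_Em_left:
  assumes A: "A \<in> carrier_mat n n" and q: "q < n" and r: "r < n" and s: "s < n"
  shows "(Em n p q * A) $$ (r,s) = (if r = p then A $$ (q,s) else 0)"
proof -
  have "(Em n p q * A) $$ (r,s) = (\<Sum>k\<in>{0..<n}. (if r = p \<and> k = q then 1 else 0) * A $$ (k,s))"
    using A r s by (simp add: scalar_prod_def)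
  also have "\<dots> = (\<Sum>k\<in>{0..<n}. if k = q then (if r = p then A $$ (k,s) else 0) else 0)"
    by (rule sum.cong) auto
  also have "\<dots> = (if r = p then A $$ (q,s) else 0)" using q by simp
  finally show ?thesis .
qed

lemma Em_transpose: "transpose_mat (Em n p q) = Em n q p"
  by (rule eq_matI) auto

lemma J_carrier[simp]: "symp_J m \<in> carrier_mat (2*m) (2*m)" by (simp add: symp_J_def)
lemma J_dims[simp]: "dim_row (symp_J m) = 2*m" "dim_col (symp_J m) = 2*m" by (simp_all add: symp_J_def)
lemma J_index: "i < 2*m \<Longrightarrow> j < 2*m \<Longrightarrow> (symp_J m :: 'a::field mat) $$ (i,j) =
   (if i < m \<and> j = i + m then 1 else if m \<le> i \<and> j + m = i then - 1 else 0)"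
  by (simp add: symp_J_def)

lemma J_transpose: "transpose_mat (symp_J m :: 'a::field mat) = - symp_J m"
  by (rule eq_matI) (auto simp: J_index)

lemma J_sq: "(symp_J m :: 'a::field mat) * symp_J m = - 1\<^sub>m (2*m)"
proof (rule eq_matI)
  fix i j assume i: "i < dim_row (- 1\<^sub>m (2*m) :: 'a mat)" and j: "j < dim_col (- 1\<^sub>m (2*m) :: 'a mat)"
  then have i: "i < 2*m" and j: "j < 2*m" by auto
  have "(symp_J m * symp_J m) $$ (i,j) = (\<Sum>k\<in>{0..<2*m}. (symp_J m :: 'a mat) $$ (i,k) * symp_J m $$ (k,j))"
    using i j by (simp add: scalar_prod_def)
  also have "\<dots> = (\<Sum>k\<in>{0..<2*m}. if k = (if i < m then i + m else i - m) then
      (if i = j then -1 else 0) else 0)"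
    by (rule sum.cong) (use i j in \<open>auto simp: J_index\<close>)
  also have "\<dots> = (if i = j then -1 else 0)" using i by auto
  finally show "(symp_J m * symp_J m) $$ (i,j) = (- 1\<^sub>m (2*m) :: 'a mat) $$ (i,j)" using i j by simp
qed auto



lemma Sp_carrier: "carrier (Sp m) = {A \<in> carrier_mat (2*m) (2*m). transpose_mat A * symp_J m * A = symp_J m}"
  by (simp add: Sp_def)
lemma Sp_mult[simp]: "A \<otimes>\<^bsub>Sp m\<^esub> B = A * B" by (simp add: Sp_def)
lemma Sp_one[simp]: "\<one>\<^bsub>Sp m\<^esub> = 1\<^sub>m (2*m)" by (simp add: Sp_def)

lemma congr_form:
  fixes A B :: "'a::field mat"
  assumes A: "A \<in> carrier_mat n n" and B: "B \<in> carrier_mat n n" and J: "J \<in> carrier_mat n n"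
  shows "transpose_mat (A*B) * J * (A*B) = transpose_mat B * (transpose_mat A * J * A) * B"
proof -
  have tA: "transpose_mat A \<in> carrier_mat n n" and tB: "transpose_mat B \<in> carrier_mat n n" using A B by auto
  show ?thesis using A B J tA tB by (simp add: transpose_mult[OF A B] assoc_mult_mat[of _ n n _ n _ n])
qed

lemma Sp_group: "group (Sp m :: 'a::field mat monoid)"
proof (rule groupI)
  let ?J = "symp_J m :: 'a mat"
  fix x y assume x: "x \<in> carrier (Sp m :: 'a mat monoid)" and y: "y \<in> carrier (Sp m :: 'a mat monoid)"
  then have xc: "x \<in> carrier_mat (2*m) (2*m)" and yc: "y \<in> carrier_mat (2*m) (2*m)"
    and xf: "transpose_mat x * ?J * x = ?J" and yf: "transpose_mat y * ?J * y = ?J"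
    by (auto simp: Sp_carrier)
  show "x \<otimes>\<^bsub>Sp m\<^esub> y \<in> carrier (Sp m)"
    using congr_form[OF xc yc J_carrier] xc yc xf yf by (simp add: Sp_carrier)
next
  show "\<one>\<^bsub>Sp m\<^esub> \<in> carrier (Sp m :: 'a mat monoid)" by (simp add: Sp_carrier)
next
  fix x y z assume "x \<in> carrier (Sp m :: 'a mat monoid)" "y \<in> carrier (Sp m :: 'a mat monoid)" "z \<in> carrier (Sp m :: 'a mat monoid)"
  then show "x \<otimes>\<^bsub>Sp m\<^esub> y \<otimes>\<^bsub>Sp m\<^esub> z = x \<otimes>\<^bsub>Sp m\<^esub> (y \<otimes>\<^bsub>Sp m\<^esub> z)"
    by (auto simp: Sp_carrier)
next
  fix x assume "x \<in> carrier (Sp m :: 'a mat monoid)"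
  then show "\<one>\<^bsub>Sp m\<^esub> \<otimes>\<^bsub>Sp m\<^esub> x = x" by (auto simp: Sp_carrier)
next
  let ?J = "symp_J m :: 'a mat"
  fix x assume x: "x \<in> carrier (Sp m :: 'a mat monoid)"
  then have xc: "x \<in> carrier_mat (2*m) (2*m)" and xf: "transpose_mat x * ?J * x = ?J"
    by (auto simp: Sp_carrier)
  define y where "y = (- ?J) * transpose_mat x * ?J"
  have yc: "y \<in> carrier_mat (2*m) (2*m)" unfolding y_def
    by (intro mult_carrier_mat uminus_carrier_mat) (use xc in auto)
  have yx: "y * x = 1\<^sub>m (2*m)"
  proof -
    have tx: "transpose_mat x \<in> carrier_mat (2*m) (2*m)" using xc by auto
    have mJ: "- ?J \<in> carrier_mat (2*m) (2*m)" by (intro uminus_carrier_mat) simp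
    have "y * x = (- ?J) * (transpose_mat x * ?J * x)" unfolding y_def
      using xc tx mJ by (simp add: assoc_mult_mat[of _ "2*m" "2*m" _ "2*m" _ "2*m"] del: uminus_mult_left_mat)
    also have "\<dots> = (- ?J) * ?J" using xf by simp
    also have "\<dots> = - (?J * ?J)" by simp
    also have "\<dots> = 1\<^sub>m (2*m)" by (simp add: J_sq)
    finally show ?thesis .
  qed
  have xy: "x * y = 1\<^sub>m (2*m)" by (rule mat_mult_left_right_inverse[OF yc xc yx])
  have "transpose_mat y * ?J * y = transpose_mat (x*y) * ?J * (x*y)"
    using congr_form[OF xc yc J_carrier] xf by simp
  also have "\<dots> = ?J" using xy by simp
  finally have "y \<in> carrier (Sp m)" using yc by (simp add: Sp_carrier)
  then show "\<exists>y\<in>carrier (Sp m). y \<otimes>\<^bsub>Sp m\<^esub> x = \<one>\<^bsub>Sp m\<^esub>" using yx by auto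
qed



lemma one_plus_in_Sp:
  fixes N :: "'a::field mat"
  assumes N: "N \<in> carrier_mat (2*m) (2*m)"
  and cond: "\<And>r s. r < 2*m \<Longrightarrow> s < 2*m \<Longrightarrow>
     (symp_J m * N) $$ (r,s) + (transpose_mat N * symp_J m) $$ (r,s)
       + (transpose_mat N * symp_J m * N) $$ (r,s) = 0"
  shows "1\<^sub>m (2*m) + N \<in> carrier (Sp m)"
proof -
  let ?n = "2*m" and ?J = "symp_J m :: 'a mat"
  have I: "1\<^sub>m ?n \<in> carrier_mat ?n ?n" by simp
  have tN: "transpose_mat N \<in> carrier_mat ?n ?n" using N by simp
  have J: "?J \<in> carrier_mat ?n ?n" by simp
  have tNJ: "transpose_mat N * ?J \<in> carrier_mat ?n ?n" using tN J by simp
  have "transpose_mat (1\<^sub>m ?n + N) = 1\<^sub>m ?n + transpose_mat N"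
    using transpose_add[OF I N] by simp
  then have "transpose_mat (1\<^sub>m ?n + N) * ?J * (1\<^sub>m ?n + N)
      = (1\<^sub>m ?n + transpose_mat N) * ?J * (1\<^sub>m ?n + N)" by simp
  also have "(1\<^sub>m ?n + transpose_mat N) * ?J = ?J + transpose_mat N * ?J"
    using add_mult_distrib_mat[OF I tN J] by simp
  also have "(?J + transpose_mat N * ?J) * (1\<^sub>m ?n + N)
      = (?J + transpose_mat N * ?J) * 1\<^sub>m ?n + (?J + transpose_mat N * ?J) * N"
    by (rule mult_add_distrib_mat[OF add_carrier_mat[OF tNJ] I N])
  also have "(?J + transpose_mat N * ?J) * N = ?J * N + transpose_mat N * ?J * N"
    by (rule add_mult_distrib_mat[OF J tNJ N])
  also have "(?J + transpose_mat N * ?J) * 1\<^sub>m ?n = ?J + transpose_mat N * ?J"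
    using J tNJ by simp
  also have "?J + transpose_mat N * ?J + (?J * N + transpose_mat N * ?J * N) = ?J"
  proof (rule eq_matI)
    fix i j assume "i < dim_row ?J" "j < dim_col ?J"
    then have i: "i < ?n" and j: "j < ?n" by auto
    show "(?J + transpose_mat N * ?J + (?J * N + transpose_mat N * ?J * N)) $$ (i,j) = ?J $$ (i,j)"
      using cond[OF i j] i j N by (simp add: algebra_simps)
  qed (use N in auto)
  finally show ?thesis using N by (simp add: Sp_carrier)
qed

lemma comm_entry:
  fixes z N :: "'a::field mat"
  assumes z: "z \<in> carrier_mat n n" and N: "N \<in> carrier_mat n n"
  and c: "z * (1\<^sub>m n + N) = (1\<^sub>m n + N) * z" and r: "r < n" and s: "s < n"
  shows "(z * N) $$ (r,s) = (N * z) $$ (r,s)"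
proof -
  have "z * (1\<^sub>m n + N) = z + z * N" using mult_add_distrib_mat[OF z one_carrier_mat N] z by simp
  moreover have "(1\<^sub>m n + N) * z = z + N * z" using add_mult_distrib_mat[OF one_carrier_mat N z] z by simp
  ultimately have "(z + z * N) $$ (r,s) = (z + N * z) $$ (r,s)" using c by simp
  then show ?thesis using z N r s by simp
qed



lemma EJ_carrier[simp]: "Em (2*m) p q * symp_J m \<in> carrier_mat (2*m) (2*m)"
  by (rule mult_carrier_mat) auto

lemma N1_in: assumes i: "i < m"
  shows "1\<^sub>m (2*m) + Em (2*m) i (i+m) \<in> carrier (Sp m :: 'a::field mat monoid)"
proof (rule one_plus_in_Sp)
  fix r s assume r: "r < 2*m" and s: "s < 2*m"
  show "(symp_J m * Em (2*m) i (i+m)) $$ (r,s) + (transpose_mat (Em (2*m) i (i+m)) * symp_J m) $$ (r,s)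
       + (transpose_mat (Em (2*m) i (i+m)) * symp_J m * Em (2*m) i (i+m)) $$ (r,s) = (0::'a)"
    using i r s by (auto simp: Em_transpose mult_Em_right mult_Em_left J_index simp del: index_mult_mat(1))
qed simp

lemma N2_in: assumes i: "i < m"
  shows "1\<^sub>m (2*m) + Em (2*m) (i+m) i \<in> carrier (Sp m :: 'a::field mat monoid)"
proof (rule one_plus_in_Sp)
  fix r s assume r: "r < 2*m" and s: "s < 2*m"
  show "(symp_J m * Em (2*m) (i+m) i) $$ (r,s) + (transpose_mat (Em (2*m) (i+m) i) * symp_J m) $$ (r,s)
       + (transpose_mat (Em (2*m) (i+m) i) * symp_J m * Em (2*m) (i+m) i) $$ (r,s) = (0::'a)"
    using i r s by (auto simp: Em_transpose mult_Em_right mult_Em_left J_index simp del: index_mult_mat(1))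
qed simp

lemma N3_in: assumes i: "i < m" and j: "j < m" and ij: "i \<noteq> j"
  shows "1\<^sub>m (2*m) + (Em (2*m) i (j+m) + Em (2*m) j (i+m)) \<in> carrier (Sp m :: 'a::field mat monoid)"
proof (rule one_plus_in_Sp)
  let ?E1 = "Em (2*m) i (j+m) :: 'a mat" and ?E2 = "Em (2*m) j (i+m) :: 'a mat" and ?J = "symp_J m :: 'a mat"
  let ?F1 = "Em (2*m) (j+m) i :: 'a mat" and ?F2 = "Em (2*m) (i+m) j :: 'a mat"
  fix r s assume r: "r < 2*m" and s: "s < 2*m"
  have tr: "transpose_mat (?E1 + ?E2) = ?F1 + ?F2"
    by (simp add: transpose_add[where nr="2*m" and nc="2*m"] Em_transpose)
  have a: "?J * (?E1 + ?E2) = ?J * ?E1 + ?J * ?E2"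
    by (rule mult_add_distrib_mat[where n="2*m" and nr="2*m" and nc="2*m"]) auto
  have b: "(?F1 + ?F2) * ?J = ?F1 * ?J + ?F2 * ?J"
    by (rule add_mult_distrib_mat[where n="2*m" and nr="2*m" and nc="2*m"]) auto
  have c1: "(?F1 * ?J + ?F2 * ?J) * (?E1 + ?E2) = ?F1 * ?J * (?E1 + ?E2) + ?F2 * ?J * (?E1 + ?E2)"
    by (rule add_mult_distrib_mat[where n="2*m" and nr="2*m" and nc="2*m"]) auto
  have c2: "?F1 * ?J * (?E1 + ?E2) = ?F1 * ?J * ?E1 + ?F1 * ?J * ?E2"
    by (rule mult_add_distrib_mat[where n="2*m" and nr="2*m" and nc="2*m"]) auto
  have c3: "?F2 * ?J * (?E1 + ?E2) = ?F2 * ?J * ?E1 + ?F2 * ?J * ?E2"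
    by (rule mult_add_distrib_mat[where n="2*m" and nr="2*m" and nc="2*m"]) auto
  have JE: "?J * ?E1 \<in> carrier_mat (2*m) (2*m)" "?J * ?E2 \<in> carrier_mat (2*m) (2*m)"
    by (auto intro!: mult_carrier_mat[where n="2*m"])
  have FJE: "?F1 * ?J * ?E1 \<in> carrier_mat (2*m) (2*m)" "?F1 * ?J * ?E2 \<in> carrier_mat (2*m) (2*m)"
     "?F2 * ?J * ?E1 \<in> carrier_mat (2*m) (2*m)" "?F2 * ?J * ?E2 \<in> carrier_mat (2*m) (2*m)"
    by (auto intro!: mult_carrier_mat[where n="2*m"])
  show "(?J * (?E1 + ?E2)) $$ (r,s) + (transpose_mat (?E1 + ?E2) * ?J) $$ (r,s)
       + (transpose_mat (?E1 + ?E2) * ?J * (?E1 + ?E2)) $$ (r,s) = 0"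
    unfolding tr a b c1 c2 c3 using i j ij r s JE FJE
    by (auto simp: mult_Em_right mult_Em_left J_index simp del: index_mult_mat(1))
qed simp



lemma center_pm:
  assumes m1: "m \<ge> 1" and zC: "z \<in> group_center (Sp m :: 'a::field mat monoid)"
  shows "z = 1\<^sub>m (2*m) \<or> z = - 1\<^sub>m (2*m)"
proof -
  let ?n = "2*m" and ?J = "symp_J m :: 'a mat"
  have zS: "z \<in> carrier (Sp m :: 'a mat monoid)" and comm: "\<And>g. g \<in> carrier (Sp m :: 'a mat monoid) \<Longrightarrow> z * g = g * z"
    using zC by (auto simp: group_center_def)
  have zc: "z \<in> carrier_mat ?n ?n" and zf: "transpose_mat z * ?J * z = ?J" using zS by (auto simp: Sp_carrier)
  have F1: "(if s = i+m then z $$ (r,i) else 0) = (if r = i then z $$ (i+m,s) else 0)"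
    if i: "i < m" and r: "r < ?n" and s: "s < ?n" for i r s
  proof -
    have "(z * Em ?n i (i+m)) $$ (r,s) = (Em ?n i (i+m) * z) $$ (r,s)"
      by (rule comm_entry[OF zc Em_carrier comm[OF N1_in[OF i]] r s])
    then show ?thesis using i r s zc by (simp add: mult_Em_right mult_Em_left del: index_mult_mat(1))
  qed
  have F2: "(if s = i then z $$ (r,i+m) else 0) = (if r = i+m then z $$ (i,s) else 0)"
    if i: "i < m" and r: "r < ?n" and s: "s < ?n" for i r s
  proof -
    have "(z * Em ?n (i+m) i) $$ (r,s) = (Em ?n (i+m) i * z) $$ (r,s)"
      by (rule comm_entry[OF zc Em_carrier comm[OF N2_in[OF i]] r s])
    then show ?thesis using i r s zc by (simp add: mult_Em_right mult_Em_left del: index_mult_mat(1))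
  qed
  have F3: "z $$ (i,i) = z $$ (j+m,j+m)" if i: "i < m" and j: "j < m" and ij: "i \<noteq> j" for i j
  proof -
    let ?N = "Em ?n i (j+m) + Em ?n j (i+m) :: 'a mat"
    have Nc: "?N \<in> carrier_mat ?n ?n" by simp
    have r: "i < ?n" and s: "j + m < ?n" using i j by auto
    have e: "(z * ?N) $$ (i,j+m) = (?N * z) $$ (i,j+m)"
      by (rule comm_entry[OF zc Nc comm[OF N3_in[OF i j ij]] r s])
    have a: "z * ?N = z * Em ?n i (j+m) + z * Em ?n j (i+m)"
      by (rule mult_add_distrib_mat[where n="2*m" and nr="2*m" and nc="2*m"]) (use zc in auto)
    have b: "?N * z = Em ?n i (j+m) * z + Em ?n j (i+m) * z"
      by (rule add_mult_distrib_mat[where n="2*m" and nr="2*m" and nc="2*m"]) (use zc in auto)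
    have d: "dim_row (Em ?n j (i+m) * z) = ?n" "dim_col (Em ?n j (i+m) * z) = ?n"
      "dim_row (z * Em ?n j (i+m)) = ?n" "dim_col (z * Em ?n j (i+m)) = ?n" using zc by auto
    from e[unfolded a b] show ?thesis using i j ij r s zc d
      by (simp add: mult_Em_right mult_Em_left del: index_mult_mat(1))
  qed
  define c where "c = z $$ (0,0)"
  have m0: "0 < m" using m1 by simp
  have off: "z $$ (r,k) = 0" if r: "r < ?n" and k: "k < ?n" and rk: "r \<noteq> k" for r k
  proof (cases "k < m")
    case True
    have "k + m < ?n" using True by simp
    from F1[OF True r this] show ?thesis using rk by simp
  next
    case False
    then obtain i where i: "i < m" and ki: "k = i + m" using k by (metis add.commute le_add_diff_inverse less_diff_conv2 mult_2 not_less)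
    have "i < ?n" using i by simp
    from F2[OF i r this] show ?thesis using rk ki by simp
  qed
  have D1: "z $$ (i,i) = z $$ (i+m,i+m)" if i: "i < m" for i
  proof -
    have "i < ?n" "i + m < ?n" using i by auto
    from F1[OF i this] show ?thesis by simp
  qed
  have diag: "z $$ (k,k) = c" if k: "k < ?n" for k
  proof -
    have lo: "z $$ (i,i) = c" if i: "i < m" for i
    proof (cases "i = 0")
      case True then show ?thesis by (simp add: c_def)
    next
      case False
      have "z $$ (0,0) = z $$ (i+m,i+m)" by (rule F3[OF m0 i]) (use False in auto)
      then show ?thesis using D1[OF i] by (simp add: c_def)
    qed
    show ?thesis
    proof (cases "k < m")
      case True then show ?thesis by (rule lo)
    next
      case False
      then obtain i where i: "i < m" and ki: "k = i + m" using k by (metis add.commute le_add_diff_inverse less_diff_conv2 mult_2 not_less)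
      show ?thesis using D1[OF i] lo[OF i] ki by simp
    qed
  qed
  have zs: "z = c \<cdot>\<^sub>m 1\<^sub>m ?n"
    by (rule eq_matI) (use zc diag off in auto)
  have I: "1\<^sub>m ?n \<in> carrier_mat ?n ?n" by simp
  have "transpose_mat z = c \<cdot>\<^sub>m 1\<^sub>m ?n" by (rule eq_matI) (use zs in auto)
  then have "?J = (c \<cdot>\<^sub>m 1\<^sub>m ?n) * ?J * (c \<cdot>\<^sub>m 1\<^sub>m ?n)" using zf zs by simp
  also have "(c \<cdot>\<^sub>m 1\<^sub>m ?n) * ?J = c \<cdot>\<^sub>m ?J"
    using mult_smult_assoc_mat[OF I J_carrier] by simp
  also have "(c \<cdot>\<^sub>m ?J) * (c \<cdot>\<^sub>m 1\<^sub>m ?n) = c \<cdot>\<^sub>m (c \<cdot>\<^sub>m ?J)"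
    using mult_smult_distrib[OF smult_carrier_mat[OF J_carrier] I] by simp
  finally have "?J $$ (0,m) = (c \<cdot>\<^sub>m (c \<cdot>\<^sub>m ?J)) $$ (0,m)" by simp
  then have "1 = c * c" using m0 by (simp add: J_index)
  then have "c^2 = 1" by (simp add: power2_eq_square)
  then have "c = 1 \<or> c = -1" by (simp add: power2_eq_1_iff)
  then show ?thesis
  proof
    assume "c = 1" then have "z = 1\<^sub>m ?n" using zs by (intro eq_matI) auto
    then show ?thesis by simp
  next
    assume "c = -1" then have "z = - 1\<^sub>m ?n" using zs by (intro eq_matI) auto
    then show ?thesis by simp
  qed
qed



lemma center_normal:
  fixes G :: "('g, 'b) monoid_scheme" (structure)
  assumes "group G"
  shows "group_center G \<lhd> G"
proof -
  interpret group G by fact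
  have sub: "subgroup (group_center G) G"
  proof
    show "group_center G \<subseteq> carrier G" by (auto simp: group_center_def)
    fix x y assume x: "x \<in> group_center G" and y: "y \<in> group_center G"
    then have xc: "x \<in> carrier G" and yc: "y \<in> carrier G" by (auto simp: group_center_def)
    show "x \<otimes> y \<in> group_center G" unfolding group_center_def
    proof (intro CollectI conjI ballI)
      show "x \<otimes> y \<in> carrier G" using xc yc by simp
      fix g assume g: "g \<in> carrier G"
      have xg: "x \<otimes> g = g \<otimes> x" using x g by (auto simp: group_center_def)
      have yg: "y \<otimes> g = g \<otimes> y" using y g by (auto simp: group_center_def)
      have "x \<otimes> y \<otimes> g = x \<otimes> (y \<otimes> g)" using xc yc g by (simp add: m_assoc)
      also have "\<dots> = x \<otimes> (g \<otimes> y)" using yg by simp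
      also have "\<dots> = (x \<otimes> g) \<otimes> y" using xc yc g by (simp add: m_assoc)
      also have "\<dots> = (g \<otimes> x) \<otimes> y" using xg by simp
      also have "\<dots> = g \<otimes> (x \<otimes> y)" using xc yc g by (simp add: m_assoc)
      finally show "x \<otimes> y \<otimes> g = g \<otimes> (x \<otimes> y)" .
    qed
  next
    show "\<one> \<in> group_center G" by (auto simp: group_center_def)
  next
    fix x assume x: "x \<in> group_center G"
    then have xc: "x \<in> carrier G" by (auto simp: group_center_def)
    show "inv x \<in> group_center G" unfolding group_center_def
    proof (intro CollectI conjI ballI)
      show "inv x \<in> carrier G" using xc by simp
      fix g assume g: "g \<in> carrier G"
      have "x \<otimes> g = g \<otimes> x" using x g by (auto simp: group_center_def)
      then have xg: "x \<otimes> g = g \<otimes> x" .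
      have "inv x \<otimes> g = inv x \<otimes> (g \<otimes> x) \<otimes> inv x" using xc g by (simp add: m_assoc)
      also have "\<dots> = inv x \<otimes> (x \<otimes> g) \<otimes> inv x" using xg by simp
      also have "\<dots> = g \<otimes> inv x" using xc g by (simp add: m_assoc[symmetric])
      finally show "inv x \<otimes> g = g \<otimes> inv x" .
    qed
  qed
  show ?thesis unfolding normal_inv_iff
  proof (intro conjI ballI sub)
    fix x h assume x: "x \<in> carrier G" and h: "h \<in> group_center G"
    then have hc: "h \<in> carrier G" and "h \<otimes> x = x \<otimes> h" by (auto simp: group_center_def)
    then have "x \<otimes> h \<otimes> inv x = h \<otimes> x \<otimes> inv x" by simp
    also have "\<dots> = h" using x hc by (simp add: m_assoc)
    finally have "x \<otimes> h \<otimes> inv x = h" .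
    then show "x \<otimes> h \<otimes> inv x \<in> group_center G" using h by simp
  qed
qed



lemma J_in_Sp: "symp_J m \<in> carrier (Sp m :: 'a::field mat monoid)"
proof -
  let ?J = "symp_J m :: 'a mat"
  have "transpose_mat ?J * ?J * ?J = - (?J * ?J) * ?J" by (simp add: J_transpose)
  also have "\<dots> = ?J" by (simp add: J_sq)
  finally show ?thesis by (simp add: Sp_carrier)
qed

theorem mainTheorem4:
  fixes m :: nat
  assumes "m \<ge> 1"
  shows "covering_number (Sp m :: ('a :: {finite, field}) mat monoid)
         = covering_number (PSp m :: 'a mat set monoid)"
proof -
  let ?G = "Sp m :: 'a mat monoid"
  let ?Z = "group_center ?G"
  let ?n = "2*m"
  have grp: "group ?G" by (rule Sp_group)
  have nrm: "?Z \<lhd> ?G" by (rule center_normal[OF grp])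
  interpret normal ?Z ?G by (rule nrm)
  have "covering_number ?G = covering_number (?G Mod ?Z)"
  proof (rule cover_quot[OF grp nrm])
    fix H assume sub: "subgroup H ?G" and prp: "H \<noteq> carrier ?G"
    show "(\<lambda>a. ?Z #>\<^bsub>?G\<^esub> a) ` H \<noteq> carrier (?G Mod ?Z)"
    proof
      assume eq: "(\<lambda>a. ?Z #>\<^bsub>?G\<^esub> a) ` H = carrier (?G Mod ?Z)"
      have decomp: "\<exists>z x. z \<in> ?Z \<and> x \<in> H \<and> g = z * x" if g: "g \<in> carrier ?G" for g
      proof -
        have "?Z #>\<^bsub>?G\<^esub> g \<in> carrier (?G Mod ?Z)" using g by (auto simp: FactGroup_def RCOSETS_def)
        from this[folded eq] obtain x where x: "x \<in> H" and zx: "?Z #>\<^bsub>?G\<^esub> g = ?Z #>\<^bsub>?G\<^esub> x"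
          by (rule imageE) blast
        have "g \<in> ?Z #>\<^bsub>?G\<^esub> g" by (rule rcos_self[OF g subgroup_axioms])
        then have "g \<in> ?Z #>\<^bsub>?G\<^esub> x" using zx by simp
        then obtain z where "z \<in> ?Z" "g = z \<otimes>\<^bsub>?G\<^esub> x" by (auto simp: r_coset_def)
        then show ?thesis using x by auto
      qed
      have pm: "z = 1\<^sub>m ?n \<or> z = - 1\<^sub>m ?n" if "z \<in> ?Z" for z
        by (rule center_pm[OF assms that])
      have Hc: "x \<in> carrier_mat ?n ?n" if "x \<in> H" for x
        using subgroup.subset[OF sub] that by (auto simp: Sp_carrier)
      have xx: "x * x \<in> H" if "x \<in> H" for x
        using subgroup.m_closed[OF sub that that] by simp
      have oneH: "1\<^sub>m ?n \<in> H" using subgroup.one_closed[OF sub] by simp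
      obtain z x where zx: "z \<in> ?Z" "x \<in> H" "symp_J m = z * x"
        using decomp[OF J_in_Sp] by blast
      have xc: "x \<in> carrier_mat ?n ?n" by (rule Hc[OF zx(2)])
      have "symp_J m * symp_J m = x * x"
        using pm[OF zx(1)]
      proof
        assume "z = 1\<^sub>m ?n" then show ?thesis using zx(3) xc by simp
      next
        assume "z = - 1\<^sub>m ?n"
        then have "symp_J m = - x" using zx(3) xc by simp
        then show ?thesis using xc by simp
      qed
      then have mH: "- 1\<^sub>m ?n \<in> H" using xx[OF zx(2)] by (simp add: J_sq)
      have "carrier ?G \<subseteq> H"
      proof
        fix g assume g: "g \<in> carrier ?G"
        obtain z y where zy: "z \<in> ?Z" "y \<in> H" "g = z * y" using decomp[OF g] by blast
        have yc: "y \<in> carrier_mat ?n ?n" by (rule Hc[OF zy(2)])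
        from pm[OF zy(1)] show "g \<in> H"
        proof
          assume "z = 1\<^sub>m ?n" then show ?thesis using zy yc by simp
        next
          assume "z = - 1\<^sub>m ?n"
          then have "g = (- 1\<^sub>m ?n) \<otimes>\<^bsub>?G\<^esub> y" using zy by simp
          then show ?thesis using subgroup.m_closed[OF sub mH zy(2)] by simp
        qed
      qed
      then show False using prp subgroup.subset[OF sub] by blast
    qed
  qed
  then show ?thesis by (simp add: PSp_def)
qed

end
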